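(* For all sufficiently large $n$ the following holds for every $1\le k\le n$. Fix a recipient coordinate $i\in[n]$ and vectors $(z_j)_{j\ne i}$ in $V=\mathbb F_2^k$. If the $i$-fibre $\{(z_1,\dots,z_{i-1},u,z_{i+1},\dots,z_n):u\in V\}$ intersects $\mathcal G_{\mathrm{tr}}$, then the kernel $K_i$ on $V$ defined by $K_i\varphi(u)=\frac1{n-1}\sum_{j\ne i}\varphi(u+z_j)$ has spectral gap at least $1/2$ with respect to the uniform measure on $V$.
   Context: $V=\mathbb F_2^k$, $\mathrm{St}(n,k)=\{(z_1,\dots,z_n)\in V^n:\operatorname{span}(z_1,\dots,z_n)=V\}$. For $\xi$ in the dual $V^*$, $\chi_\xi(u)=(-1)^{\xi(u)}$ and $S_\xi(z)=\sum_{i=1}^n\chi_\xi(z_i)$. The good set is $\mathcal G_{\mathrm{tr}}=\{z\in\mathrm{St}(n,k):\max_{0\ne\xi\in V^*}|S_\xi(z)|\le n/4\}$. The spectral gap of a reversible kernel $K$ with stationary law $\rho$ is the largest $\gamma$ with $\gamma\operatorname{Var}_\rho(f)\le\frac12\sum_{x,y}\rho(x)K(x,y)(f(x)-f(y))^2$ for all real $f$. *)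

theory Defs
  imports Complex_Main
begin

text \<open>The space V = F_2^k, modelled as functions nat => bool vanishing from index k on;
  True stands for 1 in F_2 and addition is pointwise exclusive or.\<close>

definition Vsp :: "nat \<Rightarrow> (nat \<Rightarrow> bool) set" where
  "Vsp k = {u. \<forall>j\<ge>k. \<not> u j}"

definition vadd :: "(nat \<Rightarrow> bool) \<Rightarrow> (nat \<Rightarrow> bool) \<Rightarrow> (nat \<Rightarrow> bool)" where
  "vadd u v = (\<lambda>j. u j \<noteq> v j)"

definition vsum :: "(nat \<Rightarrow> nat \<Rightarrow> bool) \<Rightarrow> nat set \<Rightarrow> (nat \<Rightarrow> bool)" where
  "vsum z J = (\<lambda>c. odd (card {j\<in>J. z j c}))"

definition span2 :: "nat \<Rightarrow> (nat \<Rightarrow> nat \<Rightarrow> bool) \<Rightarrow> (nat \<Rightarrow> bool) set" where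
  "span2 n z = {vsum z J | J. J \<subseteq> {0..<n}}"

definition St :: "nat \<Rightarrow> nat \<Rightarrow> (nat \<Rightarrow> nat \<Rightarrow> bool) set" where
  "St n k = {z. (\<forall>j<n. z j \<in> Vsp k) \<and> span2 n z = Vsp k}"

definition dual_lin :: "nat \<Rightarrow> ((nat \<Rightarrow> bool) \<Rightarrow> bool) \<Rightarrow> bool" where
  "dual_lin k \<xi> = (\<forall>u\<in>Vsp k. \<forall>v\<in>Vsp k. \<xi> (vadd u v) = (\<xi> u \<noteq> \<xi> v))"

definition chi :: "((nat \<Rightarrow> bool) \<Rightarrow> bool) \<Rightarrow> (nat \<Rightarrow> bool) \<Rightarrow> real" where
  "chi \<xi> u = (if \<xi> u then -1 else 1)"

definition Sxi :: "nat \<Rightarrow> ((nat \<Rightarrow> bool) \<Rightarrow> bool) \<Rightarrow> (nat \<Rightarrow> nat \<Rightarrow> bool) \<Rightarrow> real" where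
  "Sxi n \<xi> z = (\<Sum>j<n. chi \<xi> (z j))"

definition Gtr :: "nat \<Rightarrow> nat \<Rightarrow> (nat \<Rightarrow> nat \<Rightarrow> bool) set" where
  "Gtr n k = {z \<in> St n k. \<forall>\<xi>. dual_lin k \<xi> \<and> (\<exists>u\<in>Vsp k. \<xi> u) \<longrightarrow> \<bar>Sxi n \<xi> z\<bar> \<le> real n / 4}"

definition variance_on :: "'a set \<Rightarrow> ('a \<Rightarrow> real) \<Rightarrow> ('a \<Rightarrow> real) \<Rightarrow> real" where
  "variance_on X \<rho> f = (\<Sum>x\<in>X. \<rho> x * (f x - (\<Sum>y\<in>X. \<rho> y * f y))\<^sup>2)"

definition dirichlet_form :: "'a set \<Rightarrow> ('a \<Rightarrow> real) \<Rightarrow> ('a \<Rightarrow> 'a \<Rightarrow> real) \<Rightarrow> ('a \<Rightarrow> real) \<Rightarrow> real" where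
  "dirichlet_form X \<rho> K f = (1/2) * (\<Sum>x\<in>X. \<Sum>y\<in>X. \<rho> x * K x y * (f x - f y)\<^sup>2)"

definition spectral_gap :: "'a set \<Rightarrow> ('a \<Rightarrow> real) \<Rightarrow> ('a \<Rightarrow> 'a \<Rightarrow> real) \<Rightarrow> real" where
  "spectral_gap X \<rho> K = Sup {\<gamma>. \<forall>f. \<gamma> * variance_on X \<rho> f \<le> dirichlet_form X \<rho> K f}"

definition unifV :: "nat \<Rightarrow> (nat \<Rightarrow> bool) \<Rightarrow> real" where
  "unifV k u = 1 / 2 ^ k"

text \<open>Kernel K_i: K_i phi(u) = 1/(n-1) sum_(j ~= i) phi(u + z_j), i.e.
  K_i(u,v) = #{j ~= i. v = u + z_j} / (n-1).\<close>
definition Ki :: "nat \<Rightarrow> nat \<Rightarrow> (nat \<Rightarrow> nat \<Rightarrow> bool) \<Rightarrow> (nat \<Rightarrow> bool) \<Rightarrow> (nat \<Rightarrow> bool) \<Rightarrow> real" where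
  "Ki n i z u v = real (card {j\<in>{0..<n} - {i}. v = vadd u (z j)}) / (real n - 1)"

end

theory Submission imports Defs begin

lemma Vsp_eq: "Vsp k = (\<lambda>A c. c \<in> A) ` Pow {..<k}"
proof (rule set_eqI, rule iffI)
  fix u assume "u \<in> Vsp k"
  hence "{c. u c} \<in> Pow {..<k}" unfolding Vsp_def by (auto simp: not_le[symmetric])
  moreover have "u = (\<lambda>c. c \<in> {c. u c})" by simp
  ultimately show "u \<in> (\<lambda>A c. c \<in> A) ` Pow {..<k}" by blast
next
  fix u assume "u \<in> (\<lambda>A c. c \<in> A) ` Pow {..<k}"
  thus "u \<in> Vsp k" unfolding Vsp_def by auto
qed

lemma Vsp_fin: "finite (Vsp k)"
  unfolding Vsp_eq by simp

lemma Vsp_card: "card (Vsp k) = 2 ^ k"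
proof -
  have "inj_on (\<lambda>A c. c \<in> A) (Pow {..<(k::nat)})"
    by (rule inj_onI) (auto simp: fun_eq_iff)
  thus ?thesis unfolding Vsp_eq by (simp add: card_image card_Pow)
qed

lemma vadd_in: "u \<in> Vsp k \<Longrightarrow> v \<in> Vsp k \<Longrightarrow> vadd u v \<in> Vsp k"
  unfolding Vsp_def vadd_def by auto

lemma zero_in: "(\<lambda>_. False) \<in> Vsp k" unfolding Vsp_def by auto

lemma vadd_vadd: "vadd (vadd u a) a = u" unfolding vadd_def by auto
lemma vadd_zero_iff: "(vadd u v = (\<lambda>_. False)) = (u = v)" unfolding vadd_def by (auto simp: fun_eq_iff)

lemma parity_symdiff:
  assumes "finite A" "finite B"
  shows "odd (card ((A - B) \<union> (B - A))) = (odd (card A) \<noteq> odd (card B))"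
proof -
  have d: "(A - B) \<inter> (B - A) = {}" by auto
  have c1: "card ((A - B) \<union> (B - A)) = card (A - B) + card (B - A)"
    using assms d by (simp add: card_Un_disjoint)
  have eA: "A = (A - B) \<union> (A \<inter> B)" by auto
  have cA: "card A = card (A - B) + card (A \<inter> B)"
  proof -
    have "card ((A - B) \<union> (A \<inter> B)) = card (A - B) + card (A \<inter> B)"
      using assms by (intro card_Un_disjoint) auto
    thus ?thesis using eA by simp
  qed
  have eB: "B = (B - A) \<union> (A \<inter> B)" by auto
  have cB: "card B = card (B - A) + card (A \<inter> B)"
  proof -
    have "card ((B - A) \<union> (A \<inter> B)) = card (B - A) + card (A \<inter> B)"
      using assms by (intro card_Un_disjoint) auto
    thus ?thesis using eB by simp
  qed
  show ?thesis using c1 cA cB by auto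
qed

definition bil :: "nat \<Rightarrow> (nat \<Rightarrow> bool) \<Rightarrow> (nat \<Rightarrow> bool) \<Rightarrow> bool" where
  "bil k w u = odd (card {c. c < k \<and> w c \<and> u c})"

definition ch :: "nat \<Rightarrow> (nat \<Rightarrow> bool) \<Rightarrow> (nat \<Rightarrow> bool) \<Rightarrow> real" where
  "ch k w u = chi (bil k w) u"

lemma bil_sym: "bil k w u = bil k u w"
proof -
  have "{c. c < k \<and> w c \<and> u c} = {c. c < k \<and> u c \<and> w c}" by auto
  thus ?thesis unfolding bil_def by simp
qed

lemma bil_add: "bil k w (vadd u v) = (bil k w u \<noteq> bil k w v)"
proof -
  let ?A = "{c. c < k \<and> w c \<and> u c}" and ?B = "{c. c < k \<and> w c \<and> v c}"
  have "{c. c < k \<and> w c \<and> vadd u v c} = (?A - ?B) \<union> (?B - ?A)"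
    unfolding vadd_def by auto
  moreover have "finite ?A" "finite ?B" by auto
  ultimately show ?thesis unfolding bil_def by (simp only: parity_symdiff)
qed

lemma bil_add1: "bil k (vadd u v) w = (bil k u w \<noteq> bil k v w)"
proof -
  have "bil k (vadd u v) w = bil k w (vadd u v)" by (rule bil_sym)
  also have "\<dots> = (bil k w u \<noteq> bil k w v)" by (rule bil_add)
  also have "bil k w u = bil k u w" by (rule bil_sym)
  also have "bil k w v = bil k v w" by (rule bil_sym)
  finally show ?thesis .
qed

lemma ch_add: "ch k w (vadd u v) = ch k w u * ch k w v"
  unfolding ch_def chi_def using bil_add by auto

lemma ch_sq: "ch k w u * ch k w u = 1" unfolding ch_def chi_def by auto
lemma ch_le: "ch k w u \<le> 1" unfolding ch_def chi_def by auto

lemma ch_zero: "ch k (\<lambda>_. False) u = 1" "ch k w (\<lambda>_. False) = 1"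
  unfolding ch_def chi_def bil_def by auto

lemma ch_sum:
  assumes x: "x \<in> Vsp k"
  shows "(\<Sum>w\<in>Vsp k. ch k w x) = (if x = (\<lambda>_. False) then 2 ^ k else 0)"
proof (cases "x = (\<lambda>_. False)")
  case True thus ?thesis by (simp add: ch_zero Vsp_card)
next
  case False
  then obtain c0 where "x c0" by auto
  with x have c0: "c0 < k" unfolding Vsp_def by (cases "c0 < k") force+
  define e where "e = (\<lambda>c. c = c0)"
  have e: "e \<in> Vsp k" using c0 unfolding e_def Vsp_def by auto
  have be: "bil k e x" unfolding bil_def e_def using \<open>x c0\<close> c0
  proof -
    have "{c. c < k \<and> c = c0 \<and> x c} = {c0}" using \<open>x c0\<close> c0 by auto
    thus "odd (card {c. c < k \<and> (\<lambda>c. c = c0) c \<and> x c})" by simp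
  qed
  have bij: "bij_betw (\<lambda>w. vadd w e) (Vsp k) (Vsp k)"
  proof (rule bij_betw_imageI)
    show "inj_on (\<lambda>w. vadd w e) (Vsp k)" by (rule inj_onI) (metis vadd_vadd)
    show "(\<lambda>w. vadd w e) ` Vsp k = Vsp k"
    proof
      show "(\<lambda>w. vadd w e) ` Vsp k \<subseteq> Vsp k" using vadd_in e by auto
      show "Vsp k \<subseteq> (\<lambda>w. vadd w e) ` Vsp k"
      proof
        fix w assume "w \<in> Vsp k"
        hence "vadd w e \<in> Vsp k" using vadd_in e by auto
        thus "w \<in> (\<lambda>w. vadd w e) ` Vsp k" by (metis vadd_vadd image_eqI)
      qed
    qed
  qed
  have "(\<Sum>w\<in>Vsp k. ch k w x) = (\<Sum>w\<in>Vsp k. ch k (vadd w e) x)"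
    using sum.reindex_bij_betw[OF bij, of "\<lambda>w. ch k w x"] by simp
  also have "\<dots> = (\<Sum>w\<in>Vsp k. - ch k w x)"
    using be by (intro sum.cong) (auto simp: ch_def chi_def bil_add1)
  finally have "(\<Sum>w\<in>Vsp k. ch k w x) = 0" by (simp add: sum_negf)
  with False show ?thesis by simp
qed


lemma vadd_bij: "e \<in> Vsp k \<Longrightarrow> bij_betw (\<lambda>w. vadd w e) (Vsp k) (Vsp k)"
proof (rule bij_betw_imageI)
  assume e: "e \<in> Vsp k"
  show "inj_on (\<lambda>w. vadd w e) (Vsp k)" by (rule inj_onI) (metis vadd_vadd)
  show "(\<lambda>w. vadd w e) ` Vsp k = Vsp k"
  proof
    show "(\<lambda>w. vadd w e) ` Vsp k \<subseteq> Vsp k" using vadd_in e by auto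
    show "Vsp k \<subseteq> (\<lambda>w. vadd w e) ` Vsp k"
    proof
      fix w assume "w \<in> Vsp k"
      hence "vadd w e \<in> Vsp k" using vadd_in e by auto
      thus "w \<in> (\<lambda>w. vadd w e) ` Vsp k" by (metis vadd_vadd image_eqI)
    qed
  qed
qed

definition fh :: "nat \<Rightarrow> ((nat \<Rightarrow> bool) \<Rightarrow> real) \<Rightarrow> (nat \<Rightarrow> bool) \<Rightarrow> real" where
  "fh k g w = (\<Sum>u\<in>Vsp k. g u * ch k w u)"

lemma parseval: "(\<Sum>w\<in>Vsp k. (fh k g w)\<^sup>2) = 2 ^ k * (\<Sum>u\<in>Vsp k. (g u)\<^sup>2)"
proof -
  have "(\<Sum>w\<in>Vsp k. (fh k g w)\<^sup>2) = (\<Sum>w\<in>Vsp k. \<Sum>u\<in>Vsp k. \<Sum>v\<in>Vsp k. g u * g v * ch k w (vadd u v))"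
    by (simp add: fh_def power2_eq_square sum_product ch_add mult_ac)
  also have "\<dots> = (\<Sum>u\<in>Vsp k. \<Sum>w\<in>Vsp k. \<Sum>v\<in>Vsp k. g u * g v * ch k w (vadd u v))"
    by (rule sum.swap)
  also have "\<dots> = (\<Sum>u\<in>Vsp k. \<Sum>v\<in>Vsp k. \<Sum>w\<in>Vsp k. g u * g v * ch k w (vadd u v))"
    by (intro sum.cong refl sum.swap)
  also have "\<dots> = (\<Sum>u\<in>Vsp k. \<Sum>v\<in>Vsp k. g u * g v * (\<Sum>w\<in>Vsp k. ch k w (vadd u v)))"
    by (simp add: sum_distrib_left)
  also have "\<dots> = (\<Sum>u\<in>Vsp k. \<Sum>v\<in>Vsp k. if u = v then g u * g v * 2 ^ k else 0)"
    by (intro sum.cong refl) (simp add: ch_sum vadd_in vadd_zero_iff)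
  also have "\<dots> = 2 ^ k * (\<Sum>u\<in>Vsp k. (g u)\<^sup>2)"
    by (simp add: Vsp_fin sum_distrib_left power2_eq_square mult_ac)
  finally show ?thesis .
qed

lemma fh_shift:
  assumes a: "a \<in> Vsp k"
  shows "fh k (\<lambda>u. f u - f (vadd u a)) w = fh k f w * (1 - ch k w a)"
proof -
  have "(\<Sum>u\<in>Vsp k. f (vadd u a) * ch k w u) = (\<Sum>u\<in>Vsp k. f (vadd (vadd u a) a) * ch k w (vadd u a))"
    using sum.reindex_bij_betw[OF vadd_bij[OF a], of "\<lambda>u. f (vadd u a) * ch k w u"] by simp
  also have "\<dots> = ch k w a * fh k f w"
    by (simp add: vadd_vadd ch_add fh_def sum_distrib_left mult_ac)
  finally show ?thesis
    by (simp add: fh_def left_diff_distrib sum_subtractf algebra_simps)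
qed

lemma mean_fh: "(\<Sum>y\<in>Vsp k. unifV k y * f y) = fh k f (\<lambda>_. False) / 2 ^ k"
  by (simp add: unifV_def fh_def ch_zero sum_divide_distrib)

lemma variance_fh:
  "variance_on (Vsp k) (unifV k) f =
     (\<Sum>w\<in>Vsp k. if w = (\<lambda>_. False) then 0 else (fh k f w)\<^sup>2) / (2 ^ k * 2 ^ k)"
proof -
  define m where "m = (\<Sum>y\<in>Vsp k. unifV k y * f y)"
  define g where "g = (\<lambda>u. f u - m)"
  have chs: "(\<Sum>u\<in>Vsp k. ch k w u) = (if w = (\<lambda>_. False) then 2 ^ k else 0)" if "w \<in> Vsp k" for w
  proof -
    have "(\<Sum>u\<in>Vsp k. ch k w u) = (\<Sum>u\<in>Vsp k. ch k u w)"
      by (intro sum.cong refl) (simp add: ch_def chi_def bil_sym[of k w])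
    thus ?thesis using ch_sum[OF that] by simp
  qed
  have fg: "fh k g w = (if w = (\<lambda>_. False) then 0 else fh k f w)" if w: "w \<in> Vsp k" for w
  proof -
    have "fh k g w = fh k f w - m * (\<Sum>u\<in>Vsp k. ch k w u)"
      by (simp add: fh_def g_def left_diff_distrib sum_subtractf sum_distrib_left)
    also have "\<dots> = fh k f w - m * (if w = (\<lambda>_. False) then 2 ^ k else 0)" using chs[OF w] by simp
    finally show ?thesis using mean_fh[of k f] unfolding m_def[symmetric] by auto
  qed
  have "variance_on (Vsp k) (unifV k) f = (\<Sum>u\<in>Vsp k. (g u)\<^sup>2) / 2 ^ k"
    unfolding variance_on_def m_def[symmetric] g_def by (simp add: unifV_def sum_divide_distrib)
  also have "\<dots> = (\<Sum>w\<in>Vsp k. (fh k g w)\<^sup>2) / (2 ^ k * 2 ^ k)"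
    by (simp add: parseval)
  also have "\<dots> = (\<Sum>w\<in>Vsp k. if w = (\<lambda>_. False) then 0 else (fh k f w)\<^sup>2) / (2 ^ k * 2 ^ k)"
    by (intro arg_cong2[where f="(/)"] sum.cong refl) (simp add: fg)
  finally show ?thesis .
qed

lemma card_sum_swap:
  assumes "finite J" "finite X" "\<forall>j\<in>J. g j \<in> X"
  shows "(\<Sum>y\<in>X. real (card {j\<in>J. y = g j}) * h y) = (\<Sum>j\<in>J. h (g j))"
proof -
  have c: "real (card {j\<in>J. y = g j}) = (\<Sum>j\<in>J. if y = g j then 1 else 0)" for y
    using assms(1) by (simp add: sum.If_cases Int_def)
  have "(\<Sum>y\<in>X. real (card {j\<in>J. y = g j}) * h y) = (\<Sum>y\<in>X. \<Sum>j\<in>J. if y = g j then h y else 0)"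
    unfolding c sum_distrib_right by (intro sum.cong refl) simp
  also have "\<dots> = (\<Sum>j\<in>J. \<Sum>y\<in>X. if y = g j then h y else 0)" by (rule sum.swap)
  also have "\<dots> = (\<Sum>j\<in>J. h (g j))" using assms by (simp add: if_distrib)
  finally show ?thesis .
qed


lemma dirichlet_fh:
  assumes zJ: "\<forall>j\<in>{0..<n}-{i}. z j \<in> Vsp k"
  shows "dirichlet_form (Vsp k) (unifV k) (Ki n i z) f =
    (\<Sum>j\<in>{0..<n}-{i}. \<Sum>w\<in>Vsp k. (fh k f w)\<^sup>2 * (1 - ch k w (z j))\<^sup>2) / (2 * (real n - 1) * 2 ^ k * 2 ^ k)"
proof -
  let ?J = "{0..<n}-{i}" and ?V = "Vsp k" and ?M = "(2::real) ^ k"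
  have "dirichlet_form ?V (unifV k) (Ki n i z) f =
     1/2 * (\<Sum>x\<in>?V. 1 / (?M * (real n - 1)) * (\<Sum>y\<in>?V. real (card {j\<in>?J. y = vadd x (z j)}) * (f x - f y)\<^sup>2))"
    unfolding dirichlet_form_def Ki_def unifV_def
    by (intro arg_cong2[where f="(*)"] sum.cong refl) (simp add: sum_distrib_left)
  also have "\<dots> = 1/2 * (\<Sum>x\<in>?V. 1 / (?M * (real n - 1)) * (\<Sum>j\<in>?J. (f x - f (vadd x (z j)))\<^sup>2))"
    using zJ by (intro arg_cong2[where f="(*)"] sum.cong refl card_sum_swap) (auto intro: vadd_in simp: Vsp_fin)
  also have "\<dots> = 1 / (2 * ?M * (real n - 1)) * (\<Sum>j\<in>?J. \<Sum>x\<in>?V. (f x - f (vadd x (z j)))\<^sup>2)"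
    by (subst sum.swap) (simp add: sum_distrib_left mult_ac)
  also have "\<dots> = 1 / (2 * ?M * (real n - 1)) * (\<Sum>j\<in>?J. (\<Sum>w\<in>?V. (fh k f w)\<^sup>2 * (1 - ch k w (z j))\<^sup>2) / ?M)"
  proof -
    have "(\<Sum>x\<in>?V. (f x - f (vadd x (z j)))\<^sup>2) = (\<Sum>w\<in>?V. (fh k f w)\<^sup>2 * (1 - ch k w (z j))\<^sup>2) / ?M"
      if j: "j \<in> ?J" for j
      using parseval[of k "\<lambda>u. f u - f (vadd u (z j))"] fh_shift[OF zJ[rule_format, OF j], of f]
      by (simp add: power_mult_distrib)
    thus ?thesis by (intro arg_cong2[where f="(*)"] sum.cong refl) auto
  qed
  also have "\<dots> = (\<Sum>j\<in>?J. \<Sum>w\<in>?V. (fh k f w)\<^sup>2 * (1 - ch k w (z j))\<^sup>2) / (2 * (real n - 1) * ?M * ?M)"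
    by (simp add: sum_divide_distrib[symmetric])
  finally show ?thesis .
qed

lemma main_ineq:
  assumes n: "n \<ge> 2" and i: "i < n"
    and zJ: "\<forall>j\<in>{0..<n}-{i}. z j \<in> Vsp k"
    and hyp: "\<forall>w\<in>Vsp k. w \<noteq> (\<lambda>_. False) \<longrightarrow> (\<Sum>j\<in>{0..<n}-{i}. ch k w (z j)) \<le> (real n - 1) / 2"
  shows "1/2 * variance_on (Vsp k) (unifV k) f \<le> dirichlet_form (Vsp k) (unifV k) (Ki n i z) f"
proof -
  let ?J = "{0..<n}-{i}" and ?V = "Vsp k" and ?M = "(2::real) ^ k"
  define F where "F w = (fh k f w)\<^sup>2" for w
  define S where "S = (\<Sum>w\<in>?V. if w = (\<lambda>_. False) then 0 else F w)"
  define T where "T = (\<Sum>w\<in>?V. F w * (\<Sum>j\<in>?J. (1 - ch k w (z j))\<^sup>2))"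
  have cJ: "card ?J = n - 1" using i by simp
  have nr: "real n - 1 > 0" using n by simp
  have T: "dirichlet_form ?V (unifV k) (Ki n i z) f = T / (2 * (real n - 1) * ?M * ?M)"
    unfolding dirichlet_fh[OF zJ] T_def F_def
    by (subst sum.swap) (simp add: sum_distrib_left mult_ac)
  have S: "variance_on ?V (unifV k) f = S / (?M * ?M)" unfolding variance_fh S_def F_def ..
  have tw: "(real n - 1) * (if w = (\<lambda>_. False) then 0 else F w) \<le> F w * (\<Sum>j\<in>?J. (1 - ch k w (z j))\<^sup>2)"
    if w: "w \<in> ?V" for w
  proof -
    have F0: "F w \<ge> 0" unfolding F_def by simp
    show ?thesis
    proof (cases "w = (\<lambda>_. False)")
      case True thus ?thesis using F0 by (simp add: sum_nonneg)
    next
      case False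
      have sq: "(1 - ch k w (z j))\<^sup>2 = 2 - 2 * ch k w (z j)" for j
        using ch_sq[of k w "z j"] by (simp add: power2_eq_square algebra_simps)
      have "(\<Sum>j\<in>?J. (1 - ch k w (z j))\<^sup>2) = 2 * real (card ?J) - 2 * (\<Sum>j\<in>?J. ch k w (z j))"
        by (simp add: sq sum_subtractf sum_distrib_left)
      also have "\<dots> \<ge> real n - 1" using hyp w False cJ n by auto
      finally have "real n - 1 \<le> (\<Sum>j\<in>?J. (1 - ch k w (z j))\<^sup>2)" .
      thus ?thesis using False F0 by (simp add: mult.commute mult_left_mono)
    qed
  qed
  have "(real n - 1) * S = (\<Sum>w\<in>?V. (real n - 1) * (if w = (\<lambda>_. False) then 0 else F w))"
    unfolding S_def by (rule sum_distrib_left)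
  also have "\<dots> \<le> T" unfolding T_def by (rule sum_mono) (rule tw)
  finally have key: "(real n - 1) * S \<le> T" .
  have M: "?M * ?M > 0" by simp
  have "1/2 * (S / (?M * ?M)) \<le> T / (2 * (real n - 1) * ?M * ?M)"
  proof -
    have "1/2 * (S / (?M * ?M)) = ((real n - 1) * S) / (2 * (real n - 1) * ?M * ?M)"
      using nr by (simp add: field_simps)
    also have "\<dots> \<le> T / (2 * (real n - 1) * ?M * ?M)"
      using key nr M by (intro divide_right_mono) auto
    finally show ?thesis .
  qed
  thus ?thesis using S T by simp
qed


lemma dual_bil: "dual_lin k (bil k w)"
  unfolding dual_lin_def using bil_add by auto

lemma bil_nonzero:
  assumes w: "w \<in> Vsp k" and nz: "w \<noteq> (\<lambda>_. False)"
  shows "\<exists>u\<in>Vsp k. bil k w u"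
proof -
  from nz obtain c0 where "w c0" by auto
  with w have c0: "c0 < k" unfolding Vsp_def by (cases "c0 < k") force+
  define e where "e = (\<lambda>c. c = c0)"
  have e: "e \<in> Vsp k" using c0 unfolding e_def Vsp_def by auto
  have "{c. c < k \<and> w c \<and> e c} = {c0}" using \<open>w c0\<close> c0 unfolding e_def by auto
  hence "bil k w e" unfolding bil_def by simp
  thus ?thesis using e by blast
qed

lemma chi_ge: "chi \<xi> u \<ge> -1" unfolding chi_def by auto

lemma var_pos:
  assumes k: "k \<ge> 1"
  shows "variance_on (Vsp k) (unifV k) (\<lambda>u. if u = (\<lambda>_. False) then 1 else 0) > 0"
proof -
  let ?f = "\<lambda>u::nat\<Rightarrow>bool. if u = (\<lambda>_. False) then (1::real) else 0"
  define c :: real where "c = 1 / 2 ^ k"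
  have "(2::real) ^ k \<ge> 2 ^ 1" using k by (intro power_increasing) auto
  hence c: "c > 0" "c \<le> 1/2" unfolding c_def by (auto simp: field_simps)
  have m: "(\<Sum>y\<in>Vsp k. unifV k y * ?f y) = c"
    using zero_in[of k] by (simp add: unifV_def c_def Vsp_fin if_distrib cong: if_cong)
  have "c * (1 - c)\<^sup>2 \<le> (\<Sum>x\<in>Vsp k. c * (?f x - c)\<^sup>2)"
    using member_le_sum[of "\<lambda>_. False" "Vsp k" "\<lambda>x. c * (?f x - c)\<^sup>2"] zero_in[of k] c
    by (simp add: Vsp_fin)
  moreover have "c * (1 - c)\<^sup>2 > 0" using c by simp
  ultimately show ?thesis unfolding variance_on_def m by (simp add: unifV_def c_def)
qed

theorem proposition3p4:
  "\<exists>N::nat. \<forall>n\<ge>N. \<forall>k. 1 \<le> k \<and> k \<le> n \<longrightarrow>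
     (\<forall>i<n. \<forall>z :: nat \<Rightarrow> nat \<Rightarrow> bool.
        (\<forall>j<n. j \<noteq> i \<longrightarrow> z j \<in> Vsp k) \<longrightarrow>
        (\<exists>u\<in>Vsp k. z(i := u) \<in> Gtr n k) \<longrightarrow>
        spectral_gap (Vsp k) (unifV k) (Ki n i z) \<ge> 1/2)"
proof (intro exI[of _ 6] allI impI)
  fix n k i and z :: "nat \<Rightarrow> nat \<Rightarrow> bool"
  assume n: "6 \<le> n" and k: "1 \<le> k \<and> k \<le> n" and i: "i < n"
    and zV: "\<forall>j<n. j \<noteq> i \<longrightarrow> z j \<in> Vsp k" and G: "\<exists>u\<in>Vsp k. z(i := u) \<in> Gtr n k"
  from G obtain u where u: "u \<in> Vsp k" and Gu: "z(i := u) \<in> Gtr n k" by blast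
  have zJ: "\<forall>j\<in>{0..<n}-{i}. z j \<in> Vsp k" using zV by auto
  have hyp: "\<forall>w\<in>Vsp k. w \<noteq> (\<lambda>_. False) \<longrightarrow> (\<Sum>j\<in>{0..<n}-{i}. ch k w (z j)) \<le> (real n - 1) / 2"
  proof (intro ballI impI)
    fix w assume w: "w \<in> Vsp k" and nz: "w \<noteq> (\<lambda>_. False)"
    have bound: "\<bar>Sxi n (bil k w) (z(i := u))\<bar> \<le> real n / 4"
      using Gu dual_bil[of k w] bil_nonzero[OF w nz] unfolding Gtr_def by blast
    have "Sxi n (bil k w) (z(i := u)) = chi (bil k w) u + (\<Sum>j\<in>{..<n}-{i}. chi (bil k w) ((z(i := u)) j))"
      unfolding Sxi_def using i by (simp add: sum.remove[of "{..<n}" i])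
    also have "(\<Sum>j\<in>{..<n}-{i}. chi (bil k w) ((z(i := u)) j)) = (\<Sum>j\<in>{0..<n}-{i}. ch k w (z j))"
      by (intro sum.cong) (auto simp: ch_def)
    finally have "(\<Sum>j\<in>{0..<n}-{i}. ch k w (z j)) \<le> real n / 4 + 1"
      using bound chi_ge[of "bil k w" u] by linarith
    also have "\<dots> \<le> (real n - 1) / 2" using n by simp
    finally show "(\<Sum>j\<in>{0..<n}-{i}. ch k w (z j)) \<le> (real n - 1) / 2" .
  qed
  have n2: "n \<ge> 2" using n by simp
  let ?S = "{\<gamma>. \<forall>f. \<gamma> * variance_on (Vsp k) (unifV k) f \<le> dirichlet_form (Vsp k) (unifV k) (Ki n i z) f}"
  have mem: "1/2 \<in> ?S" using main_ineq[OF n2 i zJ hyp] by blast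
  let ?f = "\<lambda>u::nat\<Rightarrow>bool. if u = (\<lambda>_. False) then (1::real) else 0"
  have vp: "variance_on (Vsp k) (unifV k) ?f > 0" using var_pos k by blast
  have bdd: "bdd_above ?S"
  proof (rule bdd_aboveI)
    fix \<gamma> assume "\<gamma> \<in> ?S"
    hence "\<gamma> * variance_on (Vsp k) (unifV k) ?f \<le> dirichlet_form (Vsp k) (unifV k) (Ki n i z) ?f" by blast
    thus "\<gamma> \<le> dirichlet_form (Vsp k) (unifV k) (Ki n i z) ?f / variance_on (Vsp k) (unifV k) ?f"
      using vp by (simp add: pos_le_divide_eq)
  qed
  show "spectral_gap (Vsp k) (unifV k) (Ki n i z) \<ge> 1/2"
    unfolding spectral_gap_def using cSup_upper[OF mem bdd] .
qed

end
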